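(* Let $-1<q<1$, $q\ne0$. For $s\in\frac12\mathbb Z_+$ let $\varphi_s:{\rm Pol}(SU_q(2))\to M_{2s+1}$ be the homomorphism associated to the $AN_q$-matrix $A_s$, and let $v_s^{(t)}=(\mathrm{id}\otimes\varphi_s)(u^{(t)})\in M_{2t+1}\otimes M_{2s+1}$. Then there is a constant $C_q$ depending only on $q$ such that $$|q|^{-2st}\le\|v_s^{(t)}\|_\infty\le C_q^s|q|^{-2st}\quad\text{for all }s,t\in\tfrac12\mathbb Z_+.$$
   Context: ${\rm Pol}(SU_q(2))$ is the $*$-algebra generated by $a_q,c_q$ subject to $a_q^*a_q+c_q^*c_q=1=a_qa_q^*+q^2c_q^*c_q$, $c_q^*c_q=c_qc_q^*$, $a_qc_q=qc_qa_q$, $a_qc_q^*=qc_q^*a_q$, with coproduct $\Delta(a_q)=a_q\otimes a_q-qc_q^*\otimes c_q$, $\Delta(c_q)=c_q\otimes a_q+a_q^*\otimes c_q$; $u^{(t)}\in M_{2t+1}({\rm Pol}(SU_q(2)))$, $t\in\frac12\mathbb Z_+$, are its irreducible unitary representations, $u^{(1/2)}=\begin{bmatrix}a_q&-qc_q^*\\c_q&a_q^*\end{bmatrix}$. $A_s=\begin{bmatrix}x_s&y_s\\0&x_s^{-1}\end{bmatrix}$ acts on $\ell^2_{2s+1}$ with basis $e_{-s},\dots,e_s$ by $x_se_k=q^ke_k$, $y_se_k=\sqrt{|q|^{-2s}-|q|^{-2k}-|q|^{2k+2}+|q|^{2s+2}}\,e_{k+1}$, $e_{s+1}=0$ (for $q<0$,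 $q^k:=|q|^ke^{i\pi k}$). $\varphi_s$ is the unique unital homomorphism with $\varphi_s(a_q)=x_s$, $\varphi_s(-qc_q^* )=y_s$, $\varphi_s(c_q)=0$, $\varphi_s(a_q^* )=x_s^{-1}$. $\|\cdot\|_\infty$ is the operator norm. *)

theory Defs
  imports "Jordan_Normal_Form.Matrix" Complex_Main
begin

definition cadj :: "complex mat \<Rightarrow> complex mat" where
  "cadj M = mat (dim_col M) (dim_row M) (\<lambda>(i,j). cnj (M $$ (j,i)))"

definition vnorm :: "complex vec \<Rightarrow> real" where
  "vnorm x = sqrt (\<Sum>i<dim_vec x. (cmod (x $ i))\<^sup>2)"

definition opnorm :: "complex mat \<Rightarrow> real" where
  "opnorm M = Sup {vnorm (M *\<^sub>v x) | x. x \<in> carrier_vec (dim_col M) \<and> vnorm x \<le> 1}"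

definition qpow :: "real \<Rightarrow> real \<Rightarrow> complex" where
  "qpow q k = complex_of_real (\<bar>q\<bar> powr k) * (if q < 0 then cis (pi * k) else 1)"

(* s = m/2. Basis e_{-s},...,e_s of l^2_{2s+1} is indexed by j = 0..m, e_{j - s}. *)
definition xs :: "real \<Rightarrow> nat \<Rightarrow> complex mat" where
  "xs q m = mat (m+1) (m+1) (\<lambda>(i,j). if i = j then qpow q (real j - real m / 2) else 0)"

definition xs_inv :: "real \<Rightarrow> nat \<Rightarrow> complex mat" where
  "xs_inv q m = mat (m+1) (m+1) (\<lambda>(i,j). if i = j then 1 / qpow q (real j - real m / 2) else 0)"

definition ys :: "real \<Rightarrow> nat \<Rightarrow> complex mat" where
  "ys q m = mat (m+1) (m+1) (\<lambda>(i,j). if i = j + 1 then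
      (let s = real m / 2; k = real j - real m / 2 in
        complex_of_real (sqrt (\<bar>q\<bar> powr (-2*s) - \<bar>q\<bar> powr (-2*k)
                              - \<bar>q\<bar> powr (2*k+2) + \<bar>q\<bar> powr (2*s+2))))
      else 0)"

(* The entries of A_s = [x_s, y_s; 0, x_s^{-1}] = (id (x) phi_s)(u^{(1/2)});
   index 0 corresponds to the first row/column. *)
definition As :: "real \<Rightarrow> nat \<Rightarrow> nat \<Rightarrow> nat \<Rightarrow> complex mat" where
  "As q m i j = (if i = 0 \<and> j = 0 then xs q m
                 else if i = 0 then ys q m
                 else if j = 0 then 0\<^sub>m (m+1) (m+1)
                 else xs_inv q m)"

(* Blocks of (id (x) phi_s)(u^{(1/2)} (tensor) ... (tensor) u^{(1/2)}) (n factors):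
   block (I,J), I,J < 2^n, with the k-th tensor factor encoded by bit k of the index,
   equals A_{i_0 j_0} * A_{i_1 j_1} * ... * A_{i_{n-1} j_{n-1}}. *)
fun tblk :: "real \<Rightarrow> nat \<Rightarrow> nat \<Rightarrow> nat \<Rightarrow> nat \<Rightarrow> complex mat" where
  "tblk q m 0 I J = 1\<^sub>m (m+1)"
| "tblk q m (Suc n) I J = As q m (I mod 2) (J mod 2) * tblk q m n (I div 2) (J div 2)"

(* The matrix (id (x) phi_s)(u^{(1/2)} tensor-power n) in M_{2^n} (x) M_{m+1},
   row index I*(m+1)+a. *)
definition Vten :: "real \<Rightarrow> nat \<Rightarrow> nat \<Rightarrow> complex mat" where
  "Vten q m n = mat (2^n*(m+1)) (2^n*(m+1))
      (\<lambda>(r,c). tblk q m n (r div (m+1)) (c div (m+1)) $$ (r mod (m+1), c mod (m+1)))"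

(* Spin n/2 subspace H_n of (C^2)^{(x) n}: vectors orthogonal to all
   eta (x) E (x) zeta, where E = e_1 (x) e_2 - q e_2 (x) e_1 is the invariant vector
   of u^{(1/2)} tensor u^{(1/2)} (placed at tensor positions i, i+1).
   Unfolded: for each index K with bit i = 0 and bit (i+1) = 1,
   <E-part, xi> = xi_K - q xi_{K - 2^i} = 0. *)
definition Hsp :: "real \<Rightarrow> nat \<Rightarrow> complex vec set" where
  "Hsp q n = {\<xi> \<in> carrier_vec (2^n). \<forall>i K. i + 1 < n \<and> K < 2^n
       \<and> (K div 2^i) mod 2 = 0 \<and> (K div 2^(i+1)) mod 2 = 1
       \<longrightarrow> \<xi> $ K - complex_of_real q * \<xi> $ (K - 2^i) = 0}"

definition kron_id :: "complex mat \<Rightarrow> nat \<Rightarrow> complex mat" where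
  "kron_id P k = mat (dim_row P * k) (dim_col P * k)
      (\<lambda>(r,c). if r mod k = c mod k then P $$ (r div k, c div k) else 0)"

(* Isometries P : C^{n+1} -> (C^2)^{(x) n} onto H_n; these are exactly the ways of
   realizing u^{(n/2)} (up to unitary equivalence) as P^* u^{(1/2) (x) n} P. *)
definition spin_iso :: "real \<Rightarrow> nat \<Rightarrow> complex mat \<Rightarrow> bool" where
  "spin_iso q n P \<longleftrightarrow> P \<in> carrier_mat (2^n) (n+1) \<and> cadj P * P = 1\<^sub>m (n+1)
     \<and> {P *\<^sub>v x | x. x \<in> carrier_vec (n+1)} = Hsp q n"

(* v_s^{(t)} = (id (x) phi_s)(u^{(t)}) with s = m/2, t = n/2, u^{(t)} = P^* u^{(1/2)(x)n} P. *)
definition vst :: "real \<Rightarrow> nat \<Rightarrow> nat \<Rightarrow> complex mat \<Rightarrow> complex mat" where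
  "vst q m n P = cadj (kron_id P (m+1)) * Vten q m n * kron_id P (m+1)"

end

theory Submission imports Defs "HOL-Analysis.L2_Norm" begin

definition ip :: "complex vec \<Rightarrow> complex vec \<Rightarrow> complex" where
  "ip u v = (\<Sum>i<dim_vec u. u$i * cnj (v$i))"

lemma vnorm_sq: "(vnorm x)^2 = (\<Sum>i<dim_vec x. (cmod (x$i))^2)"
  unfolding vnorm_def by (simp add: sum_nonneg)

lemma vnorm_nonneg: "0 \<le> vnorm x" unfolding vnorm_def by (intro real_sqrt_ge_zero sum_nonneg) simp

lemma ip_self: "ip x x = complex_of_real ((vnorm x)^2)"
  unfolding ip_def vnorm_sq of_real_sum by (intro sum.cong refl) (metis complex_norm_square)

lemma ip_adj:
  assumes "M \<in> carrier_mat nr nc" "x \<in> carrier_vec nc" "y \<in> carrier_vec nr"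
  shows "ip (M *\<^sub>v x) y = ip x (cadj M *\<^sub>v y)"
proof -
  have "ip (M *\<^sub>v x) y = (\<Sum>i<nr. (\<Sum>j<nc. M$$(i,j) * x$j) * cnj (y$i))"
    using assms by (simp add: ip_def scalar_prod_def row_def lessThan_atLeast0)
  also have "\<dots> = (\<Sum>i<nr. \<Sum>j<nc. M$$(i,j) * x$j * cnj (y$i))" by (simp add: sum_distrib_right)
  also have "\<dots> = (\<Sum>j<nc. \<Sum>i<nr. M$$(i,j) * x$j * cnj (y$i))" by (rule sum.swap)
  also have "\<dots> = ip x (cadj M *\<^sub>v y)"
    using assms by (simp add: ip_def cadj_def scalar_prod_def row_def lessThan_atLeast0
        sum_distrib_left mult_ac cnj_sum)
  finally show ?thesis .
qed

lemma ip_CS: assumes "dim_vec y = dim_vec x" shows "cmod (ip x y) \<le> vnorm x * vnorm y"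
proof -
  have "cmod (ip x y) \<le> (\<Sum>i<dim_vec x. cmod (x$i) * cmod (y$i))"
    unfolding ip_def by (rule order_trans[OF norm_sum]) (simp add: norm_mult)
  also have "\<dots> \<le> L2_set (\<lambda>i. cmod (x$i)) {..<dim_vec x} * L2_set (\<lambda>i. cmod (y$i)) {..<dim_vec x}"
    using L2_set_mult_ineq[of "\<lambda>i. cmod (x$i)" "\<lambda>i. cmod (y$i)"] by simp
  also have "\<dots> = vnorm x * vnorm y" using assms by (simp add: vnorm_def L2_set_def)
  finally show ?thesis .
qed

lemma cadj_carrier: "M \<in> carrier_mat nr nc \<Longrightarrow> cadj M \<in> carrier_mat nc nr"
  by (simp add: cadj_def)

lemma cadj_cadj: "cadj (cadj M) = M"
  by (rule eq_matI) (simp_all add: cadj_def)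

lemma iso_norm:
  assumes "M \<in> carrier_mat nr nc" "cadj M * M = 1\<^sub>m nc" "x \<in> carrier_vec nc"
  shows "vnorm (M *\<^sub>v x) = vnorm x"
proof -
  have "complex_of_real ((vnorm (M *\<^sub>v x))^2) = ip (M *\<^sub>v x) (M *\<^sub>v x)" by (simp add: ip_self)
  also have "\<dots> = ip x (cadj M *\<^sub>v (M *\<^sub>v x))" using assms by (intro ip_adj) auto
  also have "cadj M *\<^sub>v (M *\<^sub>v x) = (cadj M * M) *\<^sub>v x"
    using assms cadj_carrier[OF assms(1)] by (metis assoc_mult_mat_vec)
  also have "\<dots> = x" using assms by simp
  finally have "complex_of_real ((vnorm (M *\<^sub>v x))^2) = complex_of_real ((vnorm x)^2)" by (simp only: ip_self)
  then have "(vnorm (M *\<^sub>v x))^2 = (vnorm x)^2" using of_real_eq_iff by blast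
  then show ?thesis using vnorm_nonneg by (simp add: power2_eq_iff_nonneg)
qed

lemma coiso_norm:
  assumes "M \<in> carrier_mat nr nc" "cadj M * M = 1\<^sub>m nc" "y \<in> carrier_vec nr"
  shows "vnorm (cadj M *\<^sub>v y) \<le> vnorm y"
proof -
  define z where "z = cadj M *\<^sub>v y"
  have zc: "z \<in> carrier_vec nc" using assms cadj_carrier[OF assms(1)] by (simp add: z_def)
  have "complex_of_real ((vnorm z)^2) = ip z z" by (simp add: ip_self)
  also have "\<dots> = ip (M *\<^sub>v z) y" using ip_adj[OF assms(1) zc assms(3)] by (simp add: z_def)
  finally have "(vnorm z)^2 = cmod (ip (M *\<^sub>v z) y)"
    by (metis norm_of_real abs_of_nonneg zero_le_power2)
  also have "\<dots> \<le> vnorm (M *\<^sub>v z) * vnorm y" using assms zc by (intro ip_CS) simp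
  also have "\<dots> = vnorm z * vnorm y" using iso_norm[OF assms(1,2) zc] by simp
  finally have "vnorm z * vnorm z \<le> vnorm z * vnorm y" by (simp add: power2_eq_square)
  then show ?thesis using vnorm_nonneg[of z] vnorm_nonneg[of y] unfolding z_def[symmetric]
    by (metis mult_le_cancel_left_pos not_le order.strict_iff_order)
qed

lemma sum_split_mult:
  fixes N k :: nat and f :: "nat \<Rightarrow> 'a::comm_monoid_add"
  shows "(\<Sum>r<N*k. f r) = (\<Sum>I<N. \<Sum>a<k. f (I*k+a))"
proof (induction N)
  case 0 then show ?case by simp
next
  case (Suc N)
  have "(\<Sum>r<Suc N*k. f r) = (\<Sum>r<N*k. f r) + (\<Sum>r\<in>{N*k..<N*k+k}. f r)"
    by (simp add: add.commute sum.atLeastLessThan_concat[symmetric] lessThan_atLeast0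
        sum.atLeast0_lessThan_Suc)
  also have "(\<Sum>r\<in>{N*k..<N*k+k}. f r) = (\<Sum>a<k. f (N*k+a))"
    using sum.shift_bounds_nat_ivl[of f 0 "N*k" k]
    by (simp add: lessThan_atLeast0 add.commute)
  finally show ?case using Suc by simp
qed


lemma pair_real:
  fixes R al ze x y P Q :: real
  assumes "R > 0" "x \<ge> 0" "x^2 = al" "al \<le> R" "0 \<le> ze" "ze \<le> R" "y \<ge> 0"
    "y^2 = (R - ze) * (R - al) / R" "P \<ge> 0" "Q \<ge> 0"
  shows "(x*P + y*Q)^2 + ze*Q^2 \<le> R*P^2 + R*Q^2"
proof -
  define A where "A = sqrt (R*(R-al))"
  define B where "B = sqrt ((R-ze)*al)"
  have al0: "al \<ge> 0" using assms by auto
  have A2: "A^2 = R*(R-al)" unfolding A_def using assms by simp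
  have B2: "B^2 = (R-ze)*al" unfolding B_def using assms al0 by simp
  have "(R*x*y)^2 = (A*B)^2" using assms A2 B2
    by (simp add: power_mult_distrib) (simp add: field_simps power2_eq_square)
  moreover have "R*x*y \<ge> 0" "A*B \<ge> 0" using assms by (auto simp: A_def B_def)
  ultimately have AB: "A*B = R*x*y" using power2_eq_iff_nonneg by metis
  have sq: "0 \<le> (A*P - B*Q)^2" by simp
  have "R*((R*P^2 + R*Q^2) - ((x*P + y*Q)^2 + ze*Q^2)) = (A*P - B*Q)^2"
  proof -
    have "R*((R*P^2 + R*Q^2) - ((x*P + y*Q)^2 + ze*Q^2))
        = R*(R-x^2)*P^2 - 2*(R*x*y)*P*Q + (R*(R-ze) - R*y^2)*Q^2"
      by (simp add: power2_eq_square algebra_simps)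
    also have "R*y^2 = (R-ze)*(R-al)" using assms by simp
    also have "(A*P - B*Q)^2 = A^2*P^2 - 2*(A*B)*P*Q + B^2*Q^2"
      by (simp add: power2_eq_square algebra_simps)
    ultimately show ?thesis using A2 B2 AB assms(3) by (simp add: algebra_simps)
  qed
  then have "0 \<le> R*((R*P^2 + R*Q^2) - ((x*P + y*Q)^2 + ze*Q^2))" using sq by simp
  then show ?thesis using assms(1) by (simp add: zero_le_mult_iff)
qed

lemma pair_cplx:
  fixes X Y p q :: complex and R al ze y :: real
  assumes "R > 0" "(cmod X)^2 = al" "al \<le> R" "0 \<le> ze" "ze \<le> R" "y \<ge> 0"
    "y^2 = (R - ze) * (R - al) / R" "Y = complex_of_real y"
  shows "(cmod (X*p + Y*q))^2 + ze*(cmod q)^2 \<le> R*(cmod p)^2 + R*(cmod q)^2"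
proof -
  have "cmod (X*p + Y*q) \<le> cmod X * cmod p + y * cmod q"
    using norm_triangle_ineq[of "X*p" "Y*q"] assms by (simp add: norm_mult)
  then have "(cmod (X*p + Y*q))^2 \<le> (cmod X * cmod p + y * cmod q)^2"
    by (simp add: power_mono)
  also have "\<dots> + ze*(cmod q)^2 \<le> R*(cmod p)^2 + R*(cmod q)^2"
    by (rule pair_real) (use assms in auto)
  finally show ?thesis by simp
qed

lemma cmod_qpow: "cmod (qpow q k) = \<bar>q\<bar> powr k"
  by (simp add: qpow_def norm_mult)


definition Yv :: "real \<Rightarrow> nat \<Rightarrow> nat \<Rightarrow> real" where
  "Yv q m j = (let s = real m / 2; k = real j - real m / 2 in
        sqrt (\<bar>q\<bar> powr (-2*s) - \<bar>q\<bar> powr (-2*k)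
                              - \<bar>q\<bar> powr (2*k+2) + \<bar>q\<bar> powr (2*s+2)))"

lemma xs_apply: "a < m+1 \<Longrightarrow> (\<Sum>c<Suc m. xs q m $$ (a,c) * u c) = qpow q (real a - real m/2) * u a"
  by (simp add: xs_def if_distrib[of "\<lambda>z. z * _"] cong: if_cong)

lemma xsinv_apply: "a < m+1 \<Longrightarrow> (\<Sum>c<Suc m. xs_inv q m $$ (a,c) * u c) = 1 / qpow q (real a - real m/2) * u a"
  by (simp add: xs_inv_def if_distrib[of "\<lambda>z. z * _"] cong: if_cong)

lemma zero_apply: "a < m+1 \<Longrightarrow> (\<Sum>c<Suc m. (0\<^sub>m (m+1) (m+1) :: complex mat) $$ (a,c) * u c) = 0"
  by simp

lemma ys_apply: "a < m+1 \<Longrightarrow> (\<Sum>c<Suc m. ys q m $$ (a,c) * u c) =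
   (if a = 0 then 0 else complex_of_real (Yv q m (a-1)) * u (a-1))"
proof (cases a)
  case 0
  then show ?thesis by (simp add: ys_def)
next
  case (Suc a')
  assume "a < m+1"
  then have "(\<Sum>c<Suc m. ys q m $$ (a,c) * u c) = (\<Sum>c<m+1. if c = a' then complex_of_real (Yv q m a') * u a' else 0)"
    by (intro sum.cong refl) (auto simp: ys_def Yv_def Suc Let_def)
  also have "\<dots> = complex_of_real (Yv q m a') * u a'" using Suc \<open>a < m+1\<close> by simp
  finally show ?thesis using Suc by simp
qed


lemma inv_powr_sq: "(r::real) > 0 \<Longrightarrow> (1 / r powr e)^2 = r powr (- (2 * e))"
proof -
  assume r: "r > 0"
  have "(1 / r powr e)^2 = 1 / (r powr e)^2" by (simp add: power_divide)
  also have "(r powr e)^2 = r powr (2*e)" using r by (simp add: powr_power)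
  finally show ?thesis by (simp only: powr_minus_divide)
qed

lemma yv_facts:
  assumes "0 < \<bar>q\<bar>" "\<bar>q\<bar> < 1" "j < m"
  defines "r \<equiv> \<bar>q\<bar>"
  defines "R \<equiv> r powr (- real m)"
  defines "al \<equiv> (cmod (qpow q (real (Suc j) - real m/2)))^2"
  defines "ze \<equiv> (cmod (1 / qpow q (real j - real m/2)))^2"
  shows "(Yv q m j)^2 = (R - ze) * (R - al) / R" "al \<le> R" "ze \<le> R" "0 \<le> ze" "R > 0"
    "0 \<le> Yv q m j"
proof -
  have r0: "r > 0" "r < 1" using assms by auto
  define a where "a = r powr (real m)"
  define b where "b = r powr (real j)"
  have a0: "a > 0" and b0: "b > 0" using r0 by (auto simp: a_def b_def)
  have R: "R = 1/a" unfolding R_def a_def by (simp add: powr_minus_divide)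
  have al: "al = r^2 * b^2 / a"
  proof -
    have "al = (r powr (real (Suc j) - real m/2))^2" unfolding al_def r_def by (simp add: cmod_qpow)
    also have "\<dots> = r powr (2 * (real (Suc j) - real m/2))" using r0 by (simp add: powr_power)
    also have "2 * (real (Suc j) - real m/2) = 2 + 2 * real j - real m" by simp
    also have "r powr (2 + 2 * real j - real m) = r powr 2 * (r powr real j)^2 / r powr real m"
      using r0 by (simp add: powr_diff powr_add powr_power mult_ac)
    finally show ?thesis using r0 by (simp add: a_def b_def powr_numeral)
  qed
  have ze: "ze = a / b^2"
  proof -
    have "ze = (1 / r powr (real j - real m/2))^2" unfolding ze_def r_def by (simp add: cmod_qpow norm_divide)
    also have "\<dots> = r powr (- (2 * (real j - real m/2)))" using r0
      by (intro inv_powr_sq) simp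
    also have "- (2 * (real j - real m/2)) = real m - 2 * real j" by simp
    also have "r powr (real m - 2 * real j) = r powr real m / (r powr real j)^2"
      using r0 by (simp add: powr_diff powr_power mult_ac)
    finally show ?thesis by (simp add: a_def b_def)
  qed
  have arg: "r powr (-2*(real m/2)) - r powr (-2*(real j - real m/2))
           - r powr (2*(real j - real m/2)+2) + r powr (2*(real m/2)+2)
         = 1/a - a/b^2 - r^2*b^2/a + a*r^2"
  proof -
    have e1: "r powr (-2*(real m/2)) = 1/a" using r0 by (simp add: a_def powr_minus_divide)
    have e2: "r powr (-2*(real j - real m/2)) = a/b^2"
    proof -
      have "-2*(real j - real m/2) = real m - 2 * real j" by simp
      then show ?thesis using r0 by (simp add: powr_diff powr_power mult_ac a_def b_def)
    qed
    have e3: "r powr (2*(real j - real m/2)+2) = r^2*b^2/a"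
    proof -
      have "2*(real j - real m/2)+2 = 2 + 2 * real j - real m" by simp
      then show ?thesis using r0 by (simp add: powr_diff powr_add powr_power mult_ac a_def b_def powr_numeral)
    qed
    have e4: "r powr (2*(real m/2)+2) = a*r^2"
      using r0 by (simp add: powr_add a_def powr_numeral)
    show ?thesis using e1 e2 e3 e4 by simp
  qed
  have id: "1/a - a/b^2 - r^2*b^2/a + a*r^2 = (1/a - a/b^2) * (1/a - r^2*b^2/a) / (1/a)"
    using a0 b0 by (simp add: field_simps power2_eq_square)
  have bnd1: "a / b^2 \<le> 1/a"
  proof -
    have "r powr (real m - 2 * real j) \<le> r powr (- real m)"
      using r0 assms(3) by (intro powr_mono') auto
    then show ?thesis using r0 by (simp add: powr_diff powr_power powr_minus_divide a_def b_def)
  qed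
  have bnd2: "r^2 * b^2 / a \<le> 1/a"
  proof -
    have "r powr (2 + 2 * real j - real m) \<le> r powr (- real m)"
      using r0 by (intro powr_mono') auto
    then show ?thesis using r0
      by (simp add: powr_diff powr_add powr_power powr_minus_divide a_def b_def powr_numeral mult_ac)
  qed
  have nn: "0 \<le> (1/a - a/b^2) * (1/a - r^2*b^2/a) / (1/a)"
    using bnd1 bnd2 a0 by (intro divide_nonneg_pos mult_nonneg_nonneg) auto
  show "(Yv q m j)^2 = (R - ze) * (R - al) / R"
    unfolding Yv_def Let_def r_def[symmetric] using arg id nn
    by (simp add: R al ze)
  show "al \<le> R" using bnd2 R al by simp
  show "ze \<le> R" using bnd1 R ze by simp
  show "0 \<le> ze" by (simp add: ze_def)
  show "R > 0" using a0 R by simp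
  show "0 \<le> Yv q m j"
    unfolding Yv_def Let_def r_def[symmetric] using arg id nn by simp
qed


lemma sum2: "(\<Sum>i<(2::nat). f i) = f 0 + f 1"
  by (simp add: numeral_2_eq_2)

lemma contr:
  assumes "0 < \<bar>q\<bar>" "\<bar>q\<bar> < 1"
  shows "(\<Sum>i<2. \<Sum>a<m+1. (cmod (\<Sum>j<2. \<Sum>c<m+1. As q m i j $$ (a,c) * u j c))^2)
     \<le> \<bar>q\<bar> powr (- real m) * (\<Sum>j<2. \<Sum>c<m+1. (cmod (u j c))^2)"
proof -
  define R where "R = \<bar>q\<bar> powr (- real m)"
  define X where "X a = qpow q (real a - real m/2)" for a :: nat
  define Z where "Z a = 1 / qpow q (real a - real m/2)" for a :: nat
  define F where "F a = cmod (X a * u 0 a + (if a = 0 then 0 else complex_of_real (Yv q m (a-1)) * u 1 (a-1)))^2" for a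
  define G where "G a = cmod (Z a * u 1 a)^2" for a
  have L: "(\<Sum>i<2. \<Sum>a<m+1. (cmod (\<Sum>j<2. \<Sum>c<m+1. As q m i j $$ (a,c) * u j c))^2)
      = (\<Sum>a<m+1. F a) + (\<Sum>a<m+1. G a)"
  proof -
    have "(\<Sum>a<m+1. (cmod (\<Sum>j<2. \<Sum>c<m+1. As q m 0 j $$ (a,c) * u j c))^2) = (\<Sum>a<m+1. F a)"
      by (intro sum.cong refl) (simp add: sum2 As_def xs_apply ys_apply F_def X_def del: sum.lessThan_Suc)
    moreover have "(\<Sum>a<m+1. (cmod (\<Sum>j<2. \<Sum>c<m+1. As q m 1 j $$ (a,c) * u j c))^2) = (\<Sum>a<m+1. G a)"
      by (intro sum.cong refl) (simp add: sum2 As_def xsinv_apply G_def Z_def del: sum.lessThan_Suc)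
    ultimately show ?thesis by (simp add: sum2)
  qed
  have R0: "R > 0" using assms by (simp add: R_def)
  have X0: "(cmod (X 0))^2 = R"
  proof -
    have "(cmod (X 0))^2 = (\<bar>q\<bar> powr (- (real m/2)))^2" by (simp add: X_def cmod_qpow)
    also have "\<dots> = R" using assms by (simp add: powr_power R_def)
    finally show ?thesis .
  qed
  have Zm: "(cmod (Z m))^2 = R"
  proof -
    have "(cmod (Z m))^2 = (1 / \<bar>q\<bar> powr (real m/2))^2" by (simp add: Z_def cmod_qpow norm_divide)
    also have "\<dots> = \<bar>q\<bar> powr (- (2 * (real m/2)))" using assms by (intro inv_powr_sq) simp
    also have "\<dots> = R" by (simp add: R_def)
    finally show ?thesis .
  qed
  have pair: "F (Suc j) + G j \<le> R * (cmod (u 0 (Suc j)))^2 + R * (cmod (u 1 j))^2" if "j < m" for j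
  proof -
    note yf = yv_facts[OF assms that]
    have "Yv q m j \<ge> 0" using yf(6) by simp
    have "(cmod (X (Suc j) * u 0 (Suc j) + complex_of_real (Yv q m j) * u 1 j))^2
          + (cmod (Z j))^2 * (cmod (u 1 j))^2
        \<le> R * (cmod (u 0 (Suc j)))^2 + R * (cmod (u 1 j))^2"
      by (rule pair_cplx[OF R0 refl]) (use yf \<open>Yv q m j \<ge> 0\<close> in \<open>auto simp: X_def Z_def R_def\<close>)
    then show ?thesis by (simp add: F_def G_def norm_mult power_mult_distrib)
  qed
  have "(\<Sum>a<m+1. F a) + (\<Sum>a<m+1. G a) = F 0 + (\<Sum>j<m. F (Suc j) + G j) + G m"
  proof -
    have "(\<Sum>a<m+1. F a) = F 0 + (\<Sum>j<m. F (Suc j))" by (simp add: sum.lessThan_Suc_shift del: sum.lessThan_Suc)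
    moreover have "(\<Sum>a<m+1. G a) = (\<Sum>j<m. G j) + G m" by simp
    ultimately show ?thesis by (simp add: sum.distrib)
  qed
  also have "\<dots> \<le> R * (cmod (u 0 0))^2 + (\<Sum>j<m. R * (cmod (u 0 (Suc j)))^2 + R * (cmod (u 1 j))^2)
       + R * (cmod (u 1 m))^2"
  proof -
    have "F 0 = R * (cmod (u 0 0))^2" using X0 by (simp add: F_def norm_mult power_mult_distrib)
    moreover have "G m = R * (cmod (u 1 m))^2" using Zm by (simp add: G_def norm_mult power_mult_distrib)
    moreover have "(\<Sum>j<m. F (Suc j) + G j) \<le> (\<Sum>j<m. R * (cmod (u 0 (Suc j)))^2 + R * (cmod (u 1 j))^2)"
      by (intro sum_mono pair) simp
    ultimately show ?thesis by simp
  qed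
  also have "\<dots> = R * (\<Sum>j<2. \<Sum>c<m+1. (cmod (u j c))^2)"
  proof -
    have "(\<Sum>c<m+1. (cmod (u 0 c))^2) = (cmod (u 0 0))^2 + (\<Sum>j<m. (cmod (u 0 (Suc j)))^2)"
      by (simp add: sum.lessThan_Suc_shift del: sum.lessThan_Suc)
    moreover have "(\<Sum>c<m+1. (cmod (u 1 c))^2) = (\<Sum>j<m. (cmod (u 1 j))^2) + (cmod (u 1 m))^2" by simp
    ultimately show ?thesis by (simp add: sum2 sum.distrib sum_distrib_left algebra_simps del: sum.lessThan_Suc)
  qed
  finally show ?thesis using L by (simp add: R_def)
qed


lemma As_carrier: "As q m i j \<in> carrier_mat (m+1) (m+1)"
  by (simp add: As_def xs_def xs_inv_def ys_def)

lemma tblk_carrier: "tblk q m n I J \<in> carrier_mat (m+1) (m+1)"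
proof (induction n arbitrary: I J)
  case 0 then show ?case by simp
next
  case (Suc n)
  show ?case using As_carrier[of q m "I mod 2" "J mod 2"] Suc.IH[of "I div 2" "J div 2"]
    by (simp only: tblk.simps) (rule mult_carrier_mat)
qed

definition TT :: "real \<Rightarrow> nat \<Rightarrow> nat \<Rightarrow> (nat \<Rightarrow> nat \<Rightarrow> complex) \<Rightarrow> nat \<Rightarrow> nat \<Rightarrow> complex" where
  "TT q m n w I a = (\<Sum>J<2^n. \<Sum>b<m+1. tblk q m n I J $$ (a,b) * w J b)"

definition SQ :: "nat \<Rightarrow> nat \<Rightarrow> (nat \<Rightarrow> nat \<Rightarrow> complex) \<Rightarrow> real" where
  "SQ m n w = (\<Sum>I<2^n. \<Sum>a<m+1. (cmod (w I a))^2)"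

lemma tblk_entry:
  assumes "a < m+1" "b < m+1"
  shows "(As q m i j * tblk q m n I J) $$ (a,b) = (\<Sum>c<m+1. As q m i j $$ (a,c) * tblk q m n I J $$ (c,b))"
  using assms As_carrier[of q m i j] tblk_carrier[of q m n I J]
  by (simp add: scalar_prod_def row_def col_def lessThan_atLeast0 del: sum.lessThan_Suc)

lemma TT_step:
  assumes "a < m+1" "i < 2"
  shows "TT q m (Suc n) w (I*2+i) a = (\<Sum>j<2. \<Sum>c<m+1. As q m i j $$ (a,c) * TT q m n (\<lambda>J b. w (J*2+j) b) I c)"
proof -
  have "TT q m (Suc n) w (I*2+i) a = (\<Sum>J<2^n*2. \<Sum>b<m+1. tblk q m (Suc n) (I*2+i) J $$ (a,b) * w J b)"
    unfolding TT_def by (simp only: power_Suc2)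
  also have "\<dots> = (\<Sum>J<2^n. \<Sum>j<2. \<Sum>b<m+1. tblk q m (Suc n) (I*2+i) (J*2+j) $$ (a,b) * w (J*2+j) b)"
    by (rule sum_split_mult)
  also have "\<dots> = (\<Sum>J<2^n. \<Sum>j<2. \<Sum>b<m+1. \<Sum>c<m+1. As q m i j $$ (a,c) * tblk q m n I J $$ (c,b) * w (J*2+j) b)"
    using assms by (intro sum.cong refl) (simp add: tblk_entry sum_distrib_right del: sum.lessThan_Suc)
  also have "\<dots> = (\<Sum>j<2. \<Sum>J<2^n. \<Sum>c<m+1. \<Sum>b<m+1. As q m i j $$ (a,c) * tblk q m n I J $$ (c,b) * w (J*2+j) b)"
    by (subst sum.swap) (intro sum.cong refl sum.swap)
  also have "\<dots> = (\<Sum>j<2. \<Sum>c<m+1. \<Sum>J<2^n. \<Sum>b<m+1. As q m i j $$ (a,c) * tblk q m n I J $$ (c,b) * w (J*2+j) b)"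
    by (intro sum.cong refl sum.swap)
  also have "\<dots> = (\<Sum>j<2. \<Sum>c<m+1. As q m i j $$ (a,c) * TT q m n (\<lambda>J b. w (J*2+j) b) I c)"
    by (simp add: TT_def sum_distrib_left mult.assoc del: sum.lessThan_Suc)
  finally show ?thesis .
qed


lemma SQ_split: "SQ m (Suc n) w = (\<Sum>j<2. SQ m n (\<lambda>J b. w (J*2+j) b))"
proof -
  have "SQ m (Suc n) w = (\<Sum>J<2^n*2. \<Sum>a<m+1. (cmod (w J a))^2)"
    unfolding SQ_def by (simp only: power_Suc2)
  also have "\<dots> = (\<Sum>J<2^n. \<Sum>j<2. \<Sum>a<m+1. (cmod (w (J*2+j) a))^2)" by (rule sum_split_mult)
  also have "\<dots> = (\<Sum>j<2. SQ m n (\<lambda>J b. w (J*2+j) b))" unfolding SQ_def by (rule sum.swap)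
  finally show ?thesis .
qed

lemma core:
  assumes "0 < \<bar>q\<bar>" "\<bar>q\<bar> < 1"
  shows "SQ m n (TT q m n w) \<le> (\<bar>q\<bar> powr (- real m))^n * SQ m n w"
proof (induction n arbitrary: w)
  case 0
  have "TT q m 0 w 0 a = w 0 a" if "a < m+1" for a
    using that by (simp add: TT_def if_distrib[of "\<lambda>z. z * _"] cong: if_cong del: sum.lessThan_Suc)
      (simp add: lessThan_Suc)
  then show ?case by (simp add: SQ_def del: sum.lessThan_Suc)
next
  case (Suc n)
  define R where "R = \<bar>q\<bar> powr (- real m)"
  have R0: "R \<ge> 0" by (simp add: R_def)
  define U where "U I j c = TT q m n (\<lambda>J b. w (J*2+j) b) I c" for I j c
  have "SQ m (Suc n) (TT q m (Suc n) w) = (\<Sum>I<2^n. \<Sum>i<2. \<Sum>a<m+1. (cmod (TT q m (Suc n) w (I*2+i) a))^2)"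
    unfolding SQ_def by (simp only: power_Suc2 sum_split_mult)
  also have "\<dots> = (\<Sum>I<2^n. \<Sum>i<2. \<Sum>a<m+1. (cmod (\<Sum>j<2. \<Sum>c<m+1. As q m i j $$ (a,c) * U I j c))^2)"
    by (intro sum.cong refl) (simp add: TT_step U_def del: sum.lessThan_Suc)
  also have "\<dots> \<le> (\<Sum>I<2^n. R * (\<Sum>j<2. \<Sum>c<m+1. (cmod (U I j c))^2))"
    by (intro sum_mono) (unfold R_def, rule contr[OF assms])
  also have "\<dots> = R * (\<Sum>j<2. SQ m n (TT q m n (\<lambda>J b. w (J*2+j) b)))"
    unfolding sum_distrib_left[symmetric] SQ_def U_def
    by (subst sum.swap) (simp add: sum.swap[of _ "{..<2^n}"] del: sum.lessThan_Suc)
  also have "\<dots> \<le> R * (\<Sum>j<2. R^n * SQ m n (\<lambda>J b. w (J*2+j) b))"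
    using R0 by (intro mult_left_mono sum_mono Suc.IH[unfolded R_def[symmetric]]) auto
  also have "\<dots> = R^(Suc n) * SQ m (Suc n) w"
    by (simp add: SQ_split sum_distrib_left mult.assoc del: sum.lessThan_Suc)
  finally show ?case by (simp add: R_def)
qed


lemma idx_lt: "I < N \<Longrightarrow> a < k \<Longrightarrow> I*k + a < N*(k::nat)"
proof -
  assume "I < N" "a < k"
  then have "I*k + a < Suc I * k" by simp
  also have "\<dots> \<le> N*k" using \<open>I < N\<close> by (intro mult_le_mono1) simp
  finally show ?thesis .
qed

lemma Vten_entry:
  assumes "I < 2^n" "a < m+1" "y \<in> carrier_vec (2^n*(m+1))"
  shows "(Vten q m n *\<^sub>v y) $ (I*(m+1)+a) = TT q m n (\<lambda>J b. y $ (J*(m+1)+b)) I a"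
proof -
  have lt: "I*(m+1)+a < 2^n*(m+1)" using assms by (intro idx_lt)
  have "(Vten q m n *\<^sub>v y) $ (I*(m+1)+a) = (\<Sum>c<2^n*(m+1). Vten q m n $$ (I*(m+1)+a, c) * y $ c)"
    using assms lt by (simp add: Vten_def scalar_prod_def row_def lessThan_atLeast0 del: sum.lessThan_Suc)
  also have "\<dots> = (\<Sum>J<2^n. \<Sum>b<m+1. Vten q m n $$ (I*(m+1)+a, J*(m+1)+b) * y $ (J*(m+1)+b))"
    by (rule sum_split_mult)
  also have "\<dots> = TT q m n (\<lambda>J b. y $ (J*(m+1)+b)) I a"
  proof -
    have ent: "Vten q m n $$ (I*(m+1)+a, J*(m+1)+b) = tblk q m n I J $$ (a,b)"
      if "J < 2^n" "b < m+1" for J b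
    proof -
      have lt2: "J*(m+1)+b < 2^n*(m+1)" using that by (rule idx_lt)
      have d: "(I*(m+1)+a) div (m+1) = I" "(I*(m+1)+a) mod (m+1) = a"
          "(J*(m+1)+b) div (m+1) = J" "(J*(m+1)+b) mod (m+1) = b"
        using assms that by (simp_all only: div_mult_self3 mod_mult_self3 div_less mod_less add_0_left[of I] add_0_left[of J]; simp)+
      show ?thesis unfolding Vten_def using lt lt2 d by (simp only: index_mat case_prod_conv)
    qed
    show ?thesis unfolding TT_def by (intro sum.cong refl) (simp only: ent lessThan_iff)
  qed
  finally show ?thesis .
qed

lemma Vten_bound:
  assumes "0 < \<bar>q\<bar>" "\<bar>q\<bar> < 1" "y \<in> carrier_vec (2^n*(m+1))"
  shows "(vnorm (Vten q m n *\<^sub>v y))^2 \<le> (\<bar>q\<bar> powr (- real m))^n * (vnorm y)^2"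
proof -
  define W where "W J b = y $ (J*(m+1)+b)" for J b
  have "(vnorm (Vten q m n *\<^sub>v y))^2 = (\<Sum>r<2^n*(m+1). (cmod ((Vten q m n *\<^sub>v y) $ r))^2)"
    by (simp add: vnorm_sq Vten_def del: sum.lessThan_Suc)
  also have "\<dots> = SQ m n (TT q m n W)"
  proof -
    have eq: "\<And>I a. I < 2^n \<Longrightarrow> a < m+1 \<Longrightarrow> (cmod ((Vten q m n *\<^sub>v y) $ (I*(m+1)+a)))^2 = (cmod (TT q m n W I a))^2"
      using Vten_entry[OF _ _ assms(3)] unfolding W_def by simp
    show ?thesis unfolding sum_split_mult SQ_def by (intro sum.cong refl) (simp only: eq lessThan_iff)
  qed
  also have "\<dots> \<le> (\<bar>q\<bar> powr (- real m))^n * SQ m n W" by (rule core[OF assms(1,2)])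
  also have "SQ m n W = (vnorm y)^2"
  proof -
    have "dim_vec y = 2^n*(m+1)" using assms by simp
    then have "(vnorm y)^2 = (\<Sum>r<2^n*(m+1). (cmod (y$r))^2)" by (simp only: vnorm_sq)
    then show ?thesis by (simp only: sum_split_mult SQ_def W_def)
  qed
  finally show ?thesis .
qed


lemma divmod_idx: "a < (k::nat) \<Longrightarrow> (I*k+a) div k = I \<and> (I*k+a) mod k = a"
  by simp

lemma prod_entry:
  "A \<in> carrier_mat nr nc \<Longrightarrow> B \<in> carrier_mat nc nd \<Longrightarrow> i < nr \<Longrightarrow> j < nd \<Longrightarrow>
   (A*B) $$ (i,j) = (\<Sum>c<nc. A $$ (i,c) * B $$ (c,j))"
  by (simp add: scalar_prod_def row_def col_def lessThan_atLeast0)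

lemma mv_entry:
  "M \<in> carrier_mat nr nc \<Longrightarrow> v \<in> carrier_vec nc \<Longrightarrow> i < nr \<Longrightarrow>
   (M *\<^sub>v v) $ i = (\<Sum>c<nc. M $$ (i,c) * v $ c)"
  by (simp add: scalar_prod_def row_def lessThan_atLeast0)

lemma kron_carrier: "P \<in> carrier_mat a b \<Longrightarrow> kron_id P k \<in> carrier_mat (a*k) (b*k)"
  by (simp add: kron_id_def)

lemma kron_entry: "P \<in> carrier_mat a b \<Longrightarrow> r < a*k \<Longrightarrow> c < b*k \<Longrightarrow>
  kron_id P k $$ (r,c) = (if r mod k = c mod k then P $$ (r div k, c div k) else 0)"
  by (simp add: kron_id_def)

lemma kron_iso:
  assumes P: "P \<in> carrier_mat a b" and iso: "cadj P * P = 1\<^sub>m b" and k: "k > 0"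
  shows "cadj (kron_id P k) * kron_id P k = 1\<^sub>m (b*k)"
proof (rule eq_matI)
  let ?K = "kron_id P k"
  have K: "?K \<in> carrier_mat (a*k) (b*k)" using P by (rule kron_carrier)
  have KA: "cadj ?K \<in> carrier_mat (b*k) (a*k)" using K by (rule cadj_carrier)
  show "dim_row (cadj ?K * ?K) = dim_row (1\<^sub>m (b*k))" "dim_col (cadj ?K * ?K) = dim_col (1\<^sub>m (b*k))"
    using K KA by auto
  fix i j assume "i < dim_row (1\<^sub>m (b*k))" "j < dim_col (1\<^sub>m (b*k))"
  then have ij: "i < b*k" "j < b*k" by auto
  have idk: "i div k < b" "j div k < b" using ij k by (auto simp: less_mult_imp_div_less)
  have imk: "i mod k < k" "j mod k < k" using k by auto
  have "(cadj ?K * ?K) $$ (i,j) = (\<Sum>r<a*k. cadj ?K $$ (i,r) * ?K $$ (r,j))"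
    using K KA ij by (intro prod_entry) auto
  also have "\<dots> = (\<Sum>R<a. \<Sum>t<k. cadj ?K $$ (i,R*k+t) * ?K $$ (R*k+t,j))"
    by (rule sum_split_mult)
  also have "\<dots> = (\<Sum>R<a. \<Sum>t<k. (if t = i mod k then cnj (P $$ (R, i div k)) else 0) *
                                   (if t = j mod k then P $$ (R, j div k) else 0))"
  proof (intro sum.cong refl)
    fix R t assume "R \<in> {..<a}" "t \<in> {..<k}"
    then have Rt: "R*k+t < a*k" "R < a" "t < k" using idx_lt by auto
    have dm: "(R*k+t) div k = R" "(R*k+t) mod k = t" using divmod_idx[OF Rt(3)] by auto
    show "cadj ?K $$ (i,R*k+t) * ?K $$ (R*k+t,j) =
       (if t = i mod k then cnj (P $$ (R, i div k)) else 0) * (if t = j mod k then P $$ (R, j div k) else 0)"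
      using K ij Rt dm kron_entry[OF P] by (auto simp: cadj_def)
  qed
  also have "\<dots> = (\<Sum>R<a. if i mod k = j mod k then cnj (P $$ (R, i div k)) * P $$ (R, j div k) else 0)"
    using imk by (intro sum.cong refl) (auto simp: if_distrib[of "\<lambda>z. z * _"] if_distrib[of "\<lambda>z. _ * z"] cong: if_cong)
  also have "\<dots> = (if i mod k = j mod k then (cadj P * P) $$ (i div k, j div k) else 0)"
  proof -
    have "(cadj P * P) $$ (i div k, j div k) = (\<Sum>R<a. cadj P $$ (i div k, R) * P $$ (R, j div k))"
      by (rule prod_entry[OF cadj_carrier[OF P] P idk])
    also have "\<dots> = (\<Sum>R<a. cnj (P $$ (R, i div k)) * P $$ (R, j div k))"
      using P idk by (intro sum.cong refl) (simp add: cadj_def)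
    finally show ?thesis by simp
  qed
  also have "\<dots> = 1\<^sub>m (b*k) $$ (i,j)"
  proof -
    have "i = j \<longleftrightarrow> i div k = j div k \<and> i mod k = j mod k" by (metis div_mult_mod_eq)
    then show ?thesis using iso idk ij by auto
  qed
  finally show "(cadj ?K * ?K) $$ (i,j) = 1\<^sub>m (b*k) $$ (i,j)" .
qed


lemma Vten_carrier: "Vten q m n \<in> carrier_mat (2^n*(m+1)) (2^n*(m+1))"
  by (simp add: Vten_def)

lemma target_eq: "0 < (r::real) \<Longrightarrow> r powr (- (2 * (real m / 2) * (real n / 2))) = sqrt ((r powr (- real m))^n)"
proof -
  assume r: "0 < r"
  have "(r powr (- real m))^n = r powr (real n * (- real m))" using r by (simp add: powr_power)
  moreover have "sqrt (r powr (real n * (- real m))) = r powr ((real n * (- real m))/2)"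
    by (rule powr_half_sqrt_powr[symmetric]) (use r in simp)
  ultimately have "sqrt ((r powr (- real m))^n) = r powr ((real n * (- real m))/2)" by simp
  also have "(real n * (- real m))/2 = - (2 * (real m / 2) * (real n / 2))" by (simp add: field_simps)
  finally show ?thesis by simp
qed

lemma vst_facts:
  fixes m :: nat
  assumes "spin_iso q n P"
  defines "K \<equiv> kron_id P (m+1)"
  shows "K \<in> carrier_mat (2^n*(m+1)) ((n+1)*(m+1))" "cadj K * K = 1\<^sub>m ((n+1)*(m+1))"
    "vst q m n P \<in> carrier_mat ((n+1)*(m+1)) ((n+1)*(m+1))"
    "\<And>x. x \<in> carrier_vec ((n+1)*(m+1)) \<Longrightarrow> vst q m n P *\<^sub>v x = cadj K *\<^sub>v (Vten q m n *\<^sub>v (K *\<^sub>v x))"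
proof -
  have P: "P \<in> carrier_mat (2^n) (n+1)" and iso: "cadj P * P = 1\<^sub>m (n+1)" using assms by (auto simp: spin_iso_def)
  show K: "K \<in> carrier_mat (2^n*(m+1)) ((n+1)*(m+1))" unfolding K_def using P by (rule kron_carrier)
  show "cadj K * K = 1\<^sub>m ((n+1)*(m+1))" unfolding K_def using P iso by (intro kron_iso) auto
  have KA: "cadj K \<in> carrier_mat ((n+1)*(m+1)) (2^n*(m+1))" using K by (rule cadj_carrier)
  show "vst q m n P \<in> carrier_mat ((n+1)*(m+1)) ((n+1)*(m+1))"
    unfolding vst_def K_def[symmetric] using K KA Vten_carrier[of q m n]
    by (intro mult_carrier_mat) auto
  fix x :: "complex vec" assume x: "x \<in> carrier_vec ((n+1)*(m+1))"
  have "vst q m n P *\<^sub>v x = (cadj K * Vten q m n) *\<^sub>v (K *\<^sub>v x)"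
    unfolding vst_def K_def[symmetric] using K KA Vten_carrier[of q m n] x
    by (intro assoc_mult_mat_vec) (auto intro: mult_carrier_mat)
  also have "\<dots> = cadj K *\<^sub>v (Vten q m n *\<^sub>v (K *\<^sub>v x))"
    using K KA Vten_carrier[of q m n] x by (intro assoc_mult_mat_vec) auto
  finally show "vst q m n P *\<^sub>v x = cadj K *\<^sub>v (Vten q m n *\<^sub>v (K *\<^sub>v x))" .
qed

lemma vst_upper:
  assumes "0 < \<bar>q\<bar>" "\<bar>q\<bar> < 1" "spin_iso q n P" "x \<in> carrier_vec ((n+1)*(m+1))" "vnorm x \<le> 1"
  shows "vnorm (vst q m n P *\<^sub>v x) \<le> \<bar>q\<bar> powr (- (2 * (real m / 2) * (real n / 2)))"
proof -
  define K where "K = kron_id P (m+1)"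
  note f = vst_facts[where m=m, OF assms(3), folded K_def]
  define y where "y = K *\<^sub>v x"
  have y: "y \<in> carrier_vec (2^n*(m+1))" using f(1) assms(4) by (simp add: y_def)
  have ny: "vnorm y = vnorm x" unfolding y_def by (rule iso_norm[OF f(1,2) assms(4)])
  have Vy: "Vten q m n *\<^sub>v y \<in> carrier_vec (2^n*(m+1))" using Vten_carrier[of q m n] y by simp
  have "vnorm (vst q m n P *\<^sub>v x) \<le> vnorm (Vten q m n *\<^sub>v y)"
    unfolding f(4)[OF assms(4)] y_def[symmetric] by (rule coiso_norm[OF f(1,2) Vy])
  also have "\<dots> \<le> sqrt ((\<bar>q\<bar> powr (- real m))^n)"
  proof -
    have "(vnorm (Vten q m n *\<^sub>v y))^2 \<le> (\<bar>q\<bar> powr (- real m))^n * (vnorm y)^2"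
      by (rule Vten_bound[OF assms(1,2) y])
    also have "\<dots> \<le> (\<bar>q\<bar> powr (- real m))^n * 1"
      using ny assms(5) vnorm_nonneg[of x] by (intro mult_left_mono) (auto simp: power_le_one)
    finally show ?thesis using vnorm_nonneg by (simp add: real_le_rsqrt)
  qed
  also have "\<dots> = \<bar>q\<bar> powr (- (2 * (real m / 2) * (real n / 2)))"
    by (rule target_eq[symmetric]) (rule assms(1))
  finally show ?thesis .
qed


lemma tblk00: "tblk q m n 0 0 $$ (0,0) = (qpow q (- (real m/2)))^n"
proof (induction n)
  case 0 then show ?case by simp
next
  case (Suc n)
  have "tblk q m (Suc n) 0 0 $$ (0,0) = (As q m 0 0 * tblk q m n 0 0) $$ (0,0)" by simp
  also have "\<dots> = (\<Sum>c<m+1. As q m 0 0 $$ (0,c) * tblk q m n 0 0 $$ (c,0))"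
    by (rule tblk_entry) auto
  also have "\<dots> = qpow q (- (real m/2)) * tblk q m n 0 0 $$ (0,0)"
    using xs_apply[of 0 m q "\<lambda>c. tblk q m n 0 0 $$ (c,0)"] by (simp add: As_def del: sum.lessThan_Suc)
  finally show ?case using Suc by simp
qed

lemma e0_Hsp: "unit_vec (2^n) 0 \<in> Hsp q n"
  unfolding Hsp_def
proof (intro CollectI conjI allI impI)
  show "unit_vec (2^n) 0 \<in> carrier_vec (2^n)" by simp
  fix i K :: nat assume h: "i + 1 < n \<and> K < 2^n \<and> (K div 2^i) mod 2 = 0 \<and> (K div 2^(i+1)) mod 2 = 1"
  have "K \<ge> 2^(i+1)"
  proof (rule ccontr)
    assume "\<not> K \<ge> 2^(i+1)"
    then have "K div 2^(i+1) = 0" by simp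
    then show False using h by simp
  qed
  moreover have "(2::nat)^i < 2^(i+1)" by simp
  moreover have "(0::nat) < 2^i" by simp
  ultimately have "K \<noteq> 0" "K - 2^i \<noteq> 0" "K - 2^i < 2^n" using h by linarith+
  then show "unit_vec (2^n) 0 $ K - complex_of_real q * unit_vec (2^n) 0 $ (K - 2^i) = 0"
    using h by simp
qed


lemma vst_lower:
  fixes m :: nat
  assumes "0 < \<bar>q\<bar>" "spin_iso q n P"
  shows "\<exists>x \<in> carrier_vec ((n+1)*(m+1)). vnorm x \<le> 1 \<and>
           \<bar>q\<bar> powr (- (2 * (real m / 2) * (real n / 2))) \<le> vnorm (vst q m n P *\<^sub>v x)"
proof -
  define K where "K = kron_id P (m+1)"
  note f = vst_facts[where m=m, OF assms(2), folded K_def]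
  have P: "P \<in> carrier_mat (2^n) (n+1)" and iso: "cadj P * P = 1\<^sub>m (n+1)"
    and rng: "{P *\<^sub>v x | x. x \<in> carrier_vec (n+1)} = Hsp q n" using assms by (auto simp: spin_iso_def)
  define e0 :: "complex vec" where "e0 = unit_vec (2^n) 0"
  have "e0 \<in> Hsp q n" unfolding e0_def by (rule e0_Hsp)
  then have "e0 \<in> {P *\<^sub>v x | x. x \<in> carrier_vec (n+1)}" by (simp only: rng)
  then obtain w where w: "w \<in> carrier_vec (n+1)" "P *\<^sub>v w = e0" by blast
  have ne0: "vnorm e0 = 1"
  proof -
    have "(vnorm e0)^2 = (\<Sum>i<(2::nat)^n. (cmod (if i = 0 then 1 else 0 :: complex))^2)"
      unfolding vnorm_sq e0_def by (intro sum.cong) auto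
    also have "\<dots> = (\<Sum>i<(2::nat)^n. if i = 0 then 1 else 0)" by (intro sum.cong) auto
    also have "\<dots> = 1" by simp
    finally show ?thesis using vnorm_nonneg[of e0] by (simp add: power2_eq_1_iff)
  qed
  have nw: "vnorm w = 1" using iso_norm[OF P iso w(1)] w(2) ne0 by simp
  define x where "x = vec ((n+1)*(m+1)) (\<lambda>c. if c mod (m+1) = 0 then w $ (c div (m+1)) else 0)"
  have xc: "x \<in> carrier_vec ((n+1)*(m+1))" by (simp add: x_def)
  have xe: "x $ (k*(m+1)+a) = (if a = 0 then w $ k else 0)" if "k < n+1" "a < m+1" for k a
  proof -
    define c where "c = k*(m+1)+a"
    have lt: "c < (n+1)*(m+1)" unfolding c_def using that by (rule idx_lt)
    have cd: "c div (m+1) = k" "c mod (m+1) = a" unfolding c_def using divmod_idx[OF that(2), of k] by auto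
    show ?thesis unfolding c_def[symmetric] x_def using lt cd by simp
  qed
  have nx: "vnorm x = 1"
  proof -
    have "(vnorm x)^2 = (\<Sum>r<(n+1)*(m+1). (cmod (x$r))^2)" using xc by (simp add: vnorm_sq del: sum.lessThan_Suc)
    also have "\<dots> = (\<Sum>k<n+1. \<Sum>a<m+1. (cmod (x$(k*(m+1)+a)))^2)" by (rule sum_split_mult)
    also have "\<dots> = (\<Sum>k<n+1. \<Sum>a<m+1. if a = 0 then (cmod (w$k))^2 else 0)"
    proof (intro sum.cong refl)
      fix k a assume "k \<in> {..<n+1}" "a \<in> {..<m+1}"
      then show "(cmod (x$(k*(m+1)+a)))^2 = (if a = 0 then (cmod (w$k))^2 else 0)"
        using xe[of k a] by simp
    qed
    also have "\<dots> = (\<Sum>k<n+1. (cmod (w$k))^2)" by simp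
    also have "\<dots> = (vnorm w)^2" using w(1) by (simp add: vnorm_sq)
    finally show ?thesis using nw vnorm_nonneg[of x] by (simp add: power2_eq_1_iff)
  qed
  define E :: "complex vec" where "E = unit_vec (2^n*(m+1)) 0"
  have KxE: "K *\<^sub>v x = E"
  proof (rule eq_vecI)
    show "dim_vec (K *\<^sub>v x) = dim_vec E" using f(1) by (simp add: E_def)
    fix r assume "r < dim_vec E"
    then have r: "r < 2^n*(m+1)" by (simp add: E_def)
    have rd: "r div (m+1) < 2^n" using r by (simp add: less_mult_imp_div_less)
    have "(K *\<^sub>v x) $ r = (\<Sum>c<(n+1)*(m+1). K $$ (r,c) * x $ c)" by (rule mv_entry[OF f(1) xc r])
    also have "\<dots> = (\<Sum>k<n+1. \<Sum>a<m+1. K $$ (r,k*(m+1)+a) * x $ (k*(m+1)+a))" by (rule sum_split_mult)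
    also have "\<dots> = (\<Sum>k<n+1. \<Sum>a<m+1. if a = 0 then (if r mod (m+1) = 0 then P $$ (r div (m+1), k) * w $ k else 0) else 0)"
    proof (intro sum.cong refl)
      fix k a assume "k \<in> {..<n+1}" "a \<in> {..<m+1}"
      then have ka: "k < n+1" "a < m+1" by auto
      define c where "c = k*(m+1)+a"
      have lt: "c < (n+1)*(m+1)" unfolding c_def using ka by (rule idx_lt)
      have cd: "c div (m+1) = k" "c mod (m+1) = a" unfolding c_def using divmod_idx[OF ka(2), of k] by auto
      have Ke: "K $$ (r,c) = (if r mod (m+1) = a then P $$ (r div (m+1), k) else 0)"
        unfolding K_def using kron_entry[OF P r lt] cd by simp
      have xce: "x $ c = (if a = 0 then w $ k else 0)" unfolding c_def by (rule xe[OF ka])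
      show "K $$ (r,k*(m+1)+a) * x $ (k*(m+1)+a) = (if a = 0 then (if r mod (m+1) = 0 then P $$ (r div (m+1), k) * w $ k else 0) else 0)"
        unfolding c_def[symmetric] Ke xce by simp
    qed
    also have "\<dots> = (if r mod (m+1) = 0 then (\<Sum>k<n+1. P $$ (r div (m+1), k) * w $ k) else 0)"
      by (simp del: sum.lessThan_Suc)
    also have "\<dots> = (if r mod (m+1) = 0 then (P *\<^sub>v w) $ (r div (m+1)) else 0)"
      using mv_entry[OF P w(1) rd] by simp
    also have "\<dots> = E $ r"
    proof -
      have "r = (r div (m+1))*(m+1) + r mod (m+1)" by (rule div_mult_mod_eq[symmetric])
      then have "r = 0 \<longleftrightarrow> r mod (m+1) = 0 \<and> r div (m+1) = 0" by auto
      then show ?thesis using w(2) r rd by (auto simp: E_def e0_def)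
    qed
    finally show "(K *\<^sub>v x) $ r = E $ r" .
  qed
  define z where "z = Vten q m n *\<^sub>v E"
  have Ec: "E \<in> carrier_vec (2^n*(m+1))" by (simp add: E_def)
  have zc: "z \<in> carrier_vec (2^n*(m+1))" unfolding z_def by (rule mult_mat_vec_carrier[OF Vten_carrier Ec])
  have KA: "cadj K \<in> carrier_mat ((n+1)*(m+1)) (2^n*(m+1))" using f(1) by (rule cadj_carrier)
  have pos: "0 < 2^n*(m+1)" by simp
  have "ip (vst q m n P *\<^sub>v x) x = ip (cadj K *\<^sub>v z) x" using f(4)[OF xc] KxE by (simp add: z_def)
  also have "\<dots> = ip z (K *\<^sub>v x)" using ip_adj[OF KA zc xc] by (simp add: cadj_cadj)
  also have "\<dots> = z $ 0"
  proof -
    have "ip z E = (\<Sum>i<2^n*(m+1). if i = 0 then z $ i else 0)"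
      unfolding ip_def using zc by (intro sum.cong) (auto simp: E_def)
    also have "\<dots> = z $ 0" using pos by simp
    finally show ?thesis using KxE by simp
  qed
  also have "\<dots> = (\<Sum>c<2^n*(m+1). Vten q m n $$ (0,c) * E $ c)"
    unfolding z_def by (rule mv_entry[OF Vten_carrier Ec pos])
  also have "\<dots> = (\<Sum>c<2^n*(m+1). if c = 0 then Vten q m n $$ (0,0) else 0)"
    by (intro sum.cong) (auto simp: E_def)
  also have "\<dots> = Vten q m n $$ (0,0)" using pos by simp
  also have "\<dots> = (qpow q (- (real m/2)))^n" using pos by (simp add: Vten_def tblk00)
  finally have ipv: "ip (vst q m n P *\<^sub>v x) x = (qpow q (- (real m/2)))^n" .
  have "\<bar>q\<bar> powr (- (2 * (real m / 2) * (real n / 2))) = cmod (ip (vst q m n P *\<^sub>v x) x)"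
  proof -
    have "cmod (ip (vst q m n P *\<^sub>v x) x) = (\<bar>q\<bar> powr (- (real m/2)))^n"
      by (simp add: ipv norm_power cmod_qpow)
    also have "\<dots> = \<bar>q\<bar> powr (real n * (- (real m/2)))" using assms(1) by (simp add: powr_power)
    also have "real n * (- (real m/2)) = - (2 * (real m / 2) * (real n / 2))" by (simp add: field_simps)
    finally show ?thesis by simp
  qed
  also have "\<dots> \<le> vnorm (vst q m n P *\<^sub>v x) * vnorm x"
    using f(3) xc by (intro ip_CS) simp
  also have "\<dots> = vnorm (vst q m n P *\<^sub>v x)" using nx by simp
  finally have "\<bar>q\<bar> powr (- (2 * (real m / 2) * (real n / 2))) \<le> vnorm (vst q m n P *\<^sub>v x)" .
  then show ?thesis using xc nx by (intro bexI[of _ x]) auto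
qed


theorem theorem5p5:
  fixes q :: real
  assumes "-1 < q" and "q < 1" and "q \<noteq> 0"
  shows "\<exists>C > 0. \<forall>(m::nat) (n::nat) P. spin_iso q n P \<longrightarrow>
           \<bar>q\<bar> powr (- (2 * (real m / 2) * (real n / 2))) \<le> opnorm (vst q m n P) \<and>
           opnorm (vst q m n P) \<le> C powr (real m / 2) * \<bar>q\<bar> powr (- (2 * (real m / 2) * (real n / 2)))"
proof (intro exI[of _ 1] conjI allI impI)
  show "(0::real) < 1" by simp
  have q0: "0 < \<bar>q\<bar>" "\<bar>q\<bar> < 1" using assms by auto
  fix m n :: nat and P assume sp: "spin_iso q n P"
  define T where "T = \<bar>q\<bar> powr (- (2 * (real m / 2) * (real n / 2)))"
  define S where "S = {vnorm (vst q m n P *\<^sub>v x) | x. x \<in> carrier_vec (dim_col (vst q m n P)) \<and> vnorm x \<le> 1}"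
  have dc: "dim_col (vst q m n P) = (n+1)*(m+1)" using vst_facts(3)[OF sp, of m] by auto
  have op: "opnorm (vst q m n P) = Sup S" unfolding opnorm_def S_def ..
  have ub: "s \<le> T" if "s \<in> S" for s
    using that vst_upper[OF q0 sp] unfolding S_def T_def dc by auto
  have ne: "S \<noteq> {}"
  proof -
    have "vnorm (0\<^sub>v ((n+1)*(m+1)) :: complex vec) = 0" by (simp add: vnorm_def)
    then show ?thesis unfolding S_def dc by (auto intro!: exI[of _ "0\<^sub>v ((n+1)*(m+1))"])
  qed
  have bdd: "bdd_above S" using ub by (intro bdd_aboveI[of S T]) auto
  show "\<bar>q\<bar> powr (- (2 * (real m / 2) * (real n / 2))) \<le> opnorm (vst q m n P)"
  proof -
    obtain x where x: "x \<in> carrier_vec ((n+1)*(m+1))" "vnorm x \<le> 1"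
      "T \<le> vnorm (vst q m n P *\<^sub>v x)"
      using vst_lower[OF q0(1) sp, of m] unfolding T_def by blast
    have "vnorm (vst q m n P *\<^sub>v x) \<in> S" unfolding S_def dc using x by blast
    then have "vnorm (vst q m n P *\<^sub>v x) \<le> Sup S" using bdd by (rule cSup_upper)
    then show ?thesis using x(3) op unfolding T_def by simp
  qed
  show "opnorm (vst q m n P) \<le> 1 powr (real m / 2) * \<bar>q\<bar> powr (- (2 * (real m / 2) * (real n / 2)))"
    using cSup_least[OF ne ub] op unfolding T_def by simp
qed

end
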